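(* Let $p\geq 5$ be prime, let $v\in\mathbb{R}^p$ have pairwise distinct coordinates, and let $H=(a_1,\dots,a_p)^\perp$ be a hyperplane. Let $\sigma=(ij)(kl)$ with $i,j,k,l$ distinct, and let $\pi$ be a $p$-cycle. Let $G\subset S_p$ be a subgroup containing $\pi$ such that $\dim\mathrm{Span}(Gv)>3$. If $H$ contains $Gv$ and $\sigma Gv$, then $a_i=a_j$ and $a_k=a_l$.
   Context: $S_p$ acts on $\mathbb{R}^p$ by permuting coordinates (the $j$-th coordinate of $\epsilon v$ is $v_{\epsilon^{-1}(j)}$); $Gv=\{gv:g\in G\}$. $(a_1,\dots,a_p)^\perp$ denotes the hyperplane $\{x:\sum_m a_mx_m=0\}$ with $(a_1,\dots,a_p)\neq 0$. *)

theory Defs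
  imports "HOL-Analysis.Analysis" "HOL-Combinatorics.Cycles" "HOL-Computational_Algebra.Primes"
begin

definition perm_act :: "('n::finite \<Rightarrow> 'n) \<Rightarrow> real^'n \<Rightarrow> real^'n" where
  "perm_act \<epsilon> v = (\<chi> j. v $ (inv \<epsilon> j))"

definition perm_subgroup :: "('n \<Rightarrow> 'n) set \<Rightarrow> bool" where
  "perm_subgroup G \<longleftrightarrow> (\<forall>g\<in>G. g permutes UNIV) \<and> id \<in> G \<and>
     (\<forall>g\<in>G. \<forall>h\<in>G. g \<circ> h \<in> G) \<and> (\<forall>g\<in>G. inv g \<in> G)"

definition full_cycle :: "('n::finite \<Rightarrow> 'n) \<Rightarrow> bool" where
  "full_cycle \<pi> \<longleftrightarrow> (\<exists>cs. distinct cs \<and> length cs = CARD('n) \<and> \<pi> = cycle_of_list cs)"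

end

theory Submission
  imports Defs "HOL-Computational_Algebra.Polynomial_Factorial"
begin

lemma map_poly_of_int_mult:
  "map_poly (of_int::int\<Rightarrow>'a::comm_ring_1) (P*Q) = map_poly of_int P * map_poly of_int Q"
  by (rule poly_eqI) (simp add: coeff_map_poly coeff_mult)

lemma map_poly_of_int_smult:
  "map_poly (of_int::int\<Rightarrow>'a::comm_ring_1) (smult c Q) = smult (of_int c) (map_poly of_int Q)"
  by (rule poly_eqI) (simp add: coeff_map_poly)

lemma map_poly_of_int_add:
  "map_poly (of_int::int\<Rightarrow>'a::comm_ring_1) (P+Q) = map_poly of_int P + map_poly of_int Q"
  by (rule poly_eqI) (simp add: coeff_map_poly)

definition cyc :: "nat \<Rightarrow> int poly" where "cyc p = (\<Sum>k<p. monom 1 k)"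
definition cycs :: "nat \<Rightarrow> int poly" where "cycs p = (\<Sum>k<p. monom (int (p choose Suc k)) k)"

lemma coeff_cyc: "coeff (cyc p) k = (if k < p then 1 else 0)"
  by (simp add: cyc_def coeff_sum)

lemma coeff_cycs: "coeff (cycs p) k = (if k < p then int (p choose Suc k) else 0)"
  by (simp add: cycs_def coeff_sum)

lemma degree_cyc: assumes "p > 0" shows "degree (cyc p) = p - 1"
proof (rule antisym)
  show "degree (cyc p) \<le> p - 1"
    by (rule degree_le) (auto simp: coeff_cyc)
  show "p - 1 \<le> degree (cyc p)"
    by (rule le_degree) (use assms in \<open>auto simp: coeff_cyc\<close>)
qed

lemma poly_cyc: "poly (cyc p) x = (\<Sum>k<p. x^k)"
  by (simp add: cyc_def poly_sum poly_monom)

lemma poly_cycs: "poly (cycs p) x = (\<Sum>k<p. of_nat (p choose Suc k) * x^k)"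
  by (simp add: cycs_def poly_sum poly_monom)

lemma cycs_eq: assumes "p > 0" shows "cycs p = pcompose (cyc p) [:1,1:]"
proof -
  have "poly (cycs p) x = poly (pcompose (cyc p) [:1,1:]) x" for x :: int
  proof (cases "x = 0")
    case True
    then show ?thesis using assms
      by (simp add: poly_cycs poly_cyc poly_pcompose power_0_left if_distrib sum.delta cong: if_cong)
  next
    case False
    have "x * poly (cycs p) x = (\<Sum>k<p. of_nat (p choose Suc k) * x^Suc k)"
      by (simp add: poly_cycs sum_distrib_left algebra_simps)
    also have "\<dots> = (\<Sum>k\<le>p. of_nat (p choose k) * x^k) - 1"
      by (subst sum.atMost_shift) (simp add: lessThan_Suc_atMost[symmetric])
    also have "(\<Sum>k\<le>p. of_nat (p choose k) * x^k) = (x+1)^p"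
      by (subst binomial_ring) (simp add: mult.commute)
    also have "(x+1)^p - 1 = x * poly (pcompose (cyc p) [:1,1:]) x"
      by (simp add: poly_pcompose poly_cyc power_diff_1_eq add.commute)
    finally show ?thesis using False by simp
  qed
  then show ?thesis by (metis poly_eq_poly_eq_iff ext)
qed

lemma eis_half:
  fixes G H :: "int poly" and p :: int
  assumes pr: "prime p" and GH: "G * H = F"
    and dvd: "\<forall>k<degree F. p dvd coeff F k" and nsq: "\<not> p^2 dvd coeff F 0"
    and lc: "\<not> p dvd lead_coeff F"
    and dG: "degree G > 0" and dH: "degree H > 0" and pG: "p dvd coeff G 0"
  shows False
proof -
  have G0: "G \<noteq> 0" and H0: "H \<noteq> 0" using dG dH by auto
  have degF: "degree F = degree G + degree H" using GH G0 H0 degree_mult_eq by blast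
  have "coeff F 0 = coeff G 0 * coeff H 0" using GH[symmetric] by (simp add: coeff_mult)
  have pH: "\<not> p dvd coeff H 0"
  proof
    assume "p dvd coeff H 0"
    then have "p*p dvd coeff G 0 * coeff H 0" using pG by (simp add: mult_dvd_mono)
    then show False using nsq \<open>coeff F 0 = _\<close> by (simp add: power2_eq_square)
  qed
  have "lead_coeff F = lead_coeff G * lead_coeff H" using GH lead_coeff_mult by blast
  then have nlc: "\<not> p dvd lead_coeff G" using lc by auto
  define r where "r = (LEAST r. \<not> p dvd coeff G r)"
  have r1: "\<not> p dvd coeff G r" unfolding r_def by (rule LeastI[of _ "degree G"]) (rule nlc)
  have r2: "r \<le> degree G" unfolding r_def by (rule Least_le) (rule nlc)
  have r3: "\<And>i. i < r \<Longrightarrow> p dvd coeff G i" unfolding r_def using not_less_Least by blast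
  have "r \<noteq> 0"
  proof
    assume "r = 0" then show False using r1 pG by simp
  qed
  then obtain r' where r': "r = Suc r'" by (cases r) auto
  have "r < degree F" using r2 degF dH by simp
  then have "p dvd coeff F r" using dvd by blast
  also have "coeff F r = (\<Sum>i\<le>r'. coeff G i * coeff H (r - i)) + coeff G r * coeff H 0"
  proof -
    have "coeff F r = (\<Sum>i\<le>r. coeff G i * coeff H (r - i))" using GH[symmetric] by (simp only: coeff_mult)
    also have "\<dots> = (\<Sum>i\<le>r'. coeff G i * coeff H (r - i)) + coeff G r * coeff H (r - r)"
      unfolding r' by (rule sum.atMost_Suc)
    finally show ?thesis by simp
  qed
  finally have "p dvd coeff G r * coeff H 0"
  proof -
    assume a: "p dvd (\<Sum>i\<le>r'. coeff G i * coeff H (r - i)) + coeff G r * coeff H 0"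
    have "p dvd (\<Sum>i\<le>r'. coeff G i * coeff H (r - i))"
      by (rule dvd_sum) (use r3 r' in auto)
    with a show ?thesis using dvd_add_right_iff by blast
  qed
  then show False using pr r1 pH by (simp add: prime_dvd_mult_iff)
qed

lemma eis:
  fixes G H :: "int poly" and p :: int
  assumes pr: "prime p" and GH: "G * H = F"
    and dvd: "\<forall>k<degree F. p dvd coeff F k" and nsq: "\<not> p^2 dvd coeff F 0"
    and lc: "\<not> p dvd lead_coeff F"
  shows "degree G = 0 \<or> degree H = 0"
proof (rule ccontr)
  assume "\<not> ?thesis"
  then have dG: "degree G > 0" and dH: "degree H > 0" by auto
  have "coeff F 0 = coeff G 0 * coeff H 0" using GH[symmetric] by (simp add: coeff_mult)
  moreover have "p dvd coeff F 0"
    using dvd dG dH GH by (metis add_gr_0 degree_mult_eq degree_0 gr_implies_not0)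
  ultimately have "p dvd coeff G 0 \<or> p dvd coeff H 0" using pr by (simp add: prime_dvd_mult_iff)
  then show False
  proof
    assume "p dvd coeff G 0" then show False using eis_half[OF pr GH dvd nsq lc dG dH] by blast
  next
    assume "p dvd coeff H 0" then show False
      using eis_half[OF pr _ dvd nsq lc dH dG] GH by (simp add: mult.commute)
  qed
qed

lemma irreducible_cyc:
  assumes pr: "prime p"
  shows "irreducible (cyc p)"
proof -
  have p0: "p > 0" "p \<ge> 2" using pr prime_gt_0_nat prime_ge_2_nat by auto
  have dc: "degree (cyc p) = p - 1" using degree_cyc p0 by auto
  have dcs: "degree (cycs p) = p - 1" using cycs_eq[OF p0(1)] dc by (simp add: degree_pcompose)
  have pri: "prime (int p)" using pr by simp
  show ?thesis
  proof (rule irreducibleI)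
    show "cyc p \<noteq> 0" using dc p0 by auto
    show "\<not> is_unit (cyc p)" using dc p0 by (auto simp: is_unit_poly_iff)
    fix a b assume ab: "cyc p = a * b"
    have F: "pcompose a [:1,1:] * pcompose b [:1,1:] = cycs p"
      using ab cycs_eq[OF p0(1)] by (simp add: pcompose_mult)
    have dvd: "\<forall>k<degree (cycs p). int p dvd coeff (cycs p) k"
    proof (intro allI impI)
      fix k assume "k < degree (cycs p)"
      then have "Suc k < p" using dcs by simp
      then have "p dvd (p choose Suc k)" using dvd_choose_prime pr p0 by auto
      then show "int p dvd coeff (cycs p) k" using \<open>Suc k < p\<close> by (simp add: coeff_cycs)
    qed
    have nsq: "\<not> (int p)^2 dvd coeff (cycs p) 0"
    proof
      assume "(int p)^2 dvd coeff (cycs p) 0"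
      then have "int p * int p dvd int p * 1" using p0 by (simp add: coeff_cycs power2_eq_square)
      then have "int p dvd 1" using p0 by (subst (asm) dvd_mult_cancel_left) auto
      then show False using pri not_prime_unit by blast
    qed
    have lc: "\<not> int p dvd lead_coeff (cycs p)"
    proof -
      have "lead_coeff (cycs p) = 1" using dcs p0 by (simp add: coeff_cycs)
      then show ?thesis using pri not_prime_unit by auto
    qed
    from eis[OF pri F dvd nsq lc] have "degree a = 0 \<or> degree b = 0"
      by (simp add: degree_pcompose)
    then show "is_unit a \<or> is_unit b"
    proof
      assume "degree a = 0"
      then obtain c where c: "a = [:c:]" by (metis degree_eq_zeroE)
      have "coeff (cyc p) 0 = c * coeff b 0" using ab c by simp
      then have "1 = c * coeff b 0" using p0 by (simp add: coeff_cyc)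
      then have "c dvd 1" by (rule dvdI)
      then show ?thesis using c by (simp add: is_unit_const_poly_iff)
    next
      assume "degree b = 0"
      then obtain c where c: "b = [:c:]" by (metis degree_eq_zeroE)
      have "coeff (cyc p) 0 = c * coeff a 0" using ab c by simp
      then have "1 = c * coeff a 0" using p0 by (simp add: coeff_cyc)
      then have "c dvd 1" by (rule dvdI)
      then show ?thesis using c by (simp add: is_unit_const_poly_iff)
    qed
  qed
qed

lemma prime_cyc: "prime p \<Longrightarrow> prime_elem (cyc p)"
  by (rule irreducible_imp_prime_poly) (rule irreducible_cyc)

lemma map_poly_of_int_diff:
  "map_poly (of_int::int\<Rightarrow>'a::comm_ring_1) (P-Q) = map_poly of_int P - map_poly of_int Q"
  by (rule poly_eqI) (simp add: coeff_map_poly)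

lemma no_small_root:
  fixes w :: complex and P :: "int poly"
  assumes pr: "prime p" and w: "poly (map_poly of_int (cyc p)) w = 0"
    and P: "P \<noteq> 0" "poly (map_poly of_int P) w = 0"
  shows "degree P \<ge> p - 1"
proof -
  define S where "S = {P::int poly. P \<noteq> 0 \<and> poly (map_poly of_int P) w = 0}"
  have "P \<in> S" using P by (simp add: S_def)
  then obtain M where M: "M \<in> S" and Mmin: "\<And>Q. Q \<in> S \<Longrightarrow> degree M \<le> degree Q"
    using ex_has_least_nat[of "\<lambda>Q. Q \<in> S" P degree] by blast
  have M0: "M \<noteq> 0" and Mw: "poly (map_poly of_int M) w = 0" using M by (auto simp: S_def)
  have p0: "p > 0" using pr prime_gt_0_nat by auto
  have cyc0: "cyc p \<noteq> 0" using degree_cyc[OF p0] p0 coeff_cyc[of p 0] by auto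
  define r where "r = pseudo_mod (cyc p) M"
  obtain a q where a: "a \<noteq> 0" "smult a (cyc p) = M * q + r" using pseudo_mod(1)[OF M0] r_def by blast
  have rdeg: "r = 0 \<or> degree r < degree M" using pseudo_mod(2)[OF M0] r_def by blast
  have "r = smult a (cyc p) - M * q" using a by simp
  then have "poly (map_poly of_int r) w = 0"
    by (simp add: map_poly_of_int_diff map_poly_of_int_mult map_poly_of_int_smult w Mw)
  then have r0: "r = 0" using rdeg Mmin[of r] unfolding S_def by fastforce
  have Mqa: "M * q = smult a (cyc p)" using a r0 by simp
  have "cyc p dvd smult a (cyc p)" by (rule dvd_smult) simp
  then have "cyc p dvd M * q" using Mqa by simp
  then have "cyc p dvd M \<or> cyc p dvd q" using prime_cyc[OF pr] prime_elem_dvd_multD by blast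
  then have "degree M \<ge> p - 1"
  proof
    assume "cyc p dvd M"
    then show ?thesis using dvd_imp_degree_le[OF _ M0, of "cyc p"] degree_cyc[OF p0] by simp
  next
    assume "cyc p dvd q"
    then obtain q' where q': "q = cyc p * q'" by (elim dvdE)
    have "cyc p * (M * q') = cyc p * [:a:]" using Mqa q' by (simp add: algebra_simps)
    then have Mq: "M * q' = [:a:]" using cyc0 mult_left_cancel by blast
    then have "q' \<noteq> 0" using a by auto
    then have "degree M = 0" using Mq M0 degree_mult_eq[of M q'] by simp
    then obtain c where c: "M = [:c:]" by (metis degree_eq_zeroE)
    then show ?thesis using Mw M0 by (simp add: map_poly_pCons)
  qed
  then show ?thesis using Mmin[OF \<open>P \<in> S\<close>] by simp
qed

locale rootp =
  fixes p :: nat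
  assumes pr: "prime p"
begin

definition E :: "int \<Rightarrow> complex" where "E x = cis (2 * pi * of_int x / of_nat p)"

lemma p_pos: "p > 0" and p2: "p \<ge> 2" using pr prime_gt_0_nat prime_ge_2_nat by auto

lemma E_add: "E (x + y) = E x * E y"
  by (simp add: E_def cis_mult add_divide_distrib distrib_left)

lemma E_1_iff: "E x = 1 \<longleftrightarrow> int p dvd x"
proof -
  have eq: "(2*pi*real_of_int x / real p = real_of_int (2*n) * pi) \<longleftrightarrow> x = n * int p" for n
  proof -
    have "(2*pi*real_of_int x / real p = real_of_int (2*n) * pi) \<longleftrightarrow>
          (2*pi*real_of_int x = real_of_int (2*n) * pi * real p)"
      using p_pos by (simp add: divide_eq_eq)
    also have "\<dots> \<longleftrightarrow> (2*pi) * real_of_int x = (2*pi) * real_of_int (n * int p)"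
      by (simp add: algebra_simps)
    also have "\<dots> \<longleftrightarrow> real_of_int x = real_of_int (n * int p)"
      using pi_gt_zero by (metis mult_cancel_left pi_neq_zero zero_neq_numeral no_zero_divisors)
    also have "\<dots> \<longleftrightarrow> x = n * int p" by (rule of_int_eq_iff)
    finally show ?thesis .
  qed
  have "E x = 1 \<longleftrightarrow> (\<exists>n::int. 2*pi*real_of_int x / real p = real_of_int (2*n) * pi)"
    by (simp add: E_def cis_conv_exp exp_eq_1)
  also have "\<dots> \<longleftrightarrow> (\<exists>n::int. x = n * int p)" using eq by simp
  also have "\<dots> \<longleftrightarrow> int p dvd x" by (auto simp: dvd_def mult.commute)
  finally show ?thesis .
qed

lemma E_eq_iff: "E x = E y \<longleftrightarrow> int p dvd (x - y)"
proof -
  have "E x = E (x - y) * E y" by (simp flip: E_add)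
  moreover have "E y \<noteq> 0" by (simp add: E_def)
  ultimately have "E x = E y \<longleftrightarrow> E (x - y) = 1" by (metis mult_cancel_right1)
  then show ?thesis by (simp add: E_1_iff)
qed

definition z :: complex where "z = E 1"

lemma E_nat: "E (int k) = z ^ k"
proof (induct k)
  case 0 show ?case by (simp add: E_def)
next
  case (Suc k)
  have "E (int (Suc k)) = E (int k + 1)" by (simp add: add.commute)
  also have "\<dots> = E (int k) * E 1" by (rule E_add)
  finally show ?case using Suc by (simp add: z_def mult.commute)
qed

lemma E_mod: "E x = z ^ nat (x mod int p)"
proof -
  have "E x = E (x mod int p)" by (simp add: E_eq_iff mod_eq_dvd_iff[symmetric])
  also have "\<dots> = z ^ nat (x mod int p)" using p_pos by (simp flip: E_nat)
  finally show ?thesis .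
qed

lemma sum_z: "(\<Sum>k<p. z ^ k) = 0"
proof -
  have "z ^ p = 1" by (metis E_nat E_1_iff dvd_refl)
  moreover have "z \<noteq> 1" using E_1_iff[of 1] p2 unfolding z_def by auto
  ultimately show ?thesis using power_diff_1_eq[of z p] by simp
qed

lemma poly_cyc_z: "poly (map_poly of_int (cyc p)) z = 0"
proof -
  have "map_poly (of_int::int\<Rightarrow>complex) (cyc p) = (\<Sum>k<p. monom 1 k)"
    by (rule poly_eqI) (simp add: coeff_map_poly coeff_cyc coeff_sum)
  then show ?thesis by (simp add: poly_sum poly_monom sum_z)
qed


lemma lin_indep:
  assumes "(\<Sum>k<p. of_int (n k) * z^k) = 0"
  shows "\<forall>k<p. n k = n (p-1)"
proof -
  define Q :: "int poly" where "Q = (\<Sum>k<p-1. monom (n k - n (p-1)) k)"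
  have cQ: "coeff Q k = (if k < p-1 then n k - n (p-1) else 0)" for k
    by (simp add: Q_def coeff_sum)
  have mQ: "map_poly (of_int::int\<Rightarrow>complex) Q = (\<Sum>k<p-1. monom (of_int (n k - n (p-1))) k)"
    by (rule poly_eqI) (simp add: coeff_map_poly cQ coeff_sum)
  have ps: "p = Suc (p-1)" using p_pos by simp
  have "poly (map_poly of_int Q) z = (\<Sum>k<p-1. of_int (n k - n (p-1)) * z^k)"
    by (simp add: mQ poly_sum poly_monom)
  also have "\<dots> = (\<Sum>k<p. of_int (n k - n (p-1)) * z^k)"
    by (subst (2) ps, subst sum.lessThan_Suc) simp
  also have "\<dots> = (\<Sum>k<p. of_int (n k) * z^k) - of_int (n (p-1)) * (\<Sum>k<p. z^k)"
    by (simp add: left_diff_distrib sum_subtractf sum_distrib_left)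
  also have "\<dots> = 0" using assms sum_z by simp
  finally have Qz: "poly (map_poly of_int Q) z = 0" .
  have "degree Q \<le> p - 2" by (rule degree_le) (auto simp: cQ)
  then have "Q = 0" using no_small_root[OF pr poly_cyc_z _ Qz] p2 by fastforce
  show ?thesis
  proof (intro allI impI)
    fix k assume k: "k < p"
    show "n k = n (p-1)"
    proof (cases "k < p-1")
      case True
      then have "coeff Q k = n k - n (p-1)" by (simp add: cQ)
      with \<open>Q = 0\<close> show ?thesis by simp
    next
      case False
      then have "k = p-1" using k by simp
      then show ?thesis by simp
    qed
  qed
qed

definition cnt :: "int list \<Rightarrow> nat \<Rightarrow> int" where
  "cnt xs k = int (length (filter (\<lambda>x. x mod int p = int k) xs))"

lemma cnt_Cons: "cnt (x # xs) k = (if k = nat (x mod int p) then 1 else 0) + cnt xs k"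
proof -
  have "(x mod int p = int k) \<longleftrightarrow> k = nat (x mod int p)" using p_pos by auto
  then show ?thesis by (simp add: cnt_def)
qed

lemma sum_E_cnt: "(\<Sum>x\<leftarrow>xs. E x) = (\<Sum>k<p. of_int (cnt xs k) * z^k)"
proof (induct xs)
  case Nil then show ?case by (simp add: cnt_def)
next
  case (Cons x xs)
  have lt: "nat (x mod int p) < p" using p_pos by (simp add: nat_less_iff)
  have "(\<Sum>k<p. of_int (cnt (x#xs) k) * z^k) =
        (\<Sum>k<p. (if k = nat (x mod int p) then z^k else 0)) + (\<Sum>k<p. of_int (cnt xs k) * z^k)"
  proof -
    have "of_int (cnt (x#xs) k) * z^k = (if k = nat (x mod int p) then z^k else 0) + of_int (cnt xs k) * z^k" for k
      by (simp add: cnt_Cons distrib_right)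
    then show ?thesis by (simp add: sum.distrib)
  qed
  also have "(\<Sum>k<p. (if k = nat (x mod int p) then z^k else 0)) = E x"
    using lt by (simp add: E_mod)
  finally show ?case using Cons by simp
qed

lemma sum_cnt: "(\<Sum>k<p. cnt xs k) = int (length xs)"
proof (induct xs)
  case Nil then show ?case by (simp add: cnt_def)
next
  case (Cons x xs)
  have lt: "nat (x mod int p) < p" using p_pos by (simp add: nat_less_iff)
  show ?case using Cons lt by (simp add: cnt_Cons sum.distrib)
qed

lemma match:
  assumes len: "length xs = length ys" and eq: "(\<Sum>x\<leftarrow>xs. E x) = (\<Sum>y\<leftarrow>ys. E y)"
    and x: "x \<in> set xs"
  shows "\<exists>y\<in>set ys. int p dvd (x - y)"
proof -
  define n where "n k = cnt xs k - cnt ys k" for k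
  have "(\<Sum>k<p. of_int (n k) * z^k) = (\<Sum>k<p. of_int (cnt xs k) * z^k) - (\<Sum>k<p. of_int (cnt ys k) * z^k)"
    by (simp add: n_def left_diff_distrib sum_subtractf)
  also have "\<dots> = 0" unfolding sum_E_cnt[symmetric] using eq by simp
  finally have "(\<Sum>k<p. of_int (n k) * z^k) = 0" .
  then have c: "\<forall>k<p. n k = n (p-1)" by (rule lin_indep)
  have "(\<Sum>k<p. n k) = 0" unfolding n_def sum_subtractf sum_cnt using len by simp
  also have "(\<Sum>k<p. n k) = (\<Sum>k<p. n (p-1))" by (rule sum.cong) (use c in blast)+
  also have "\<dots> = int p * n (p-1)" by simp
  finally have "n (p-1) = 0" using p_pos by simp
  then have n0: "\<forall>k<p. n k = 0" using c by metis
  define k0 where "k0 = nat (x mod int p)"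
  have lt: "k0 < p" using p_pos by (simp add: k0_def nat_less_iff)
  have xk: "x mod int p = int k0" using p_pos by (simp add: k0_def)
  define P where "P = (\<lambda>x'. x' mod int p = int k0)"
  have "x \<in> set (filter P xs)" using x xk by (simp add: P_def)
  then have "length (filter P xs) > 0" by (rule length_pos_if_in_set)
  then have "cnt xs k0 > 0" by (simp add: cnt_def P_def)
  then have "cnt ys k0 > 0" using n0 lt by (simp add: n_def)
  then have "filter P ys \<noteq> []" by (auto simp: cnt_def P_def)
  then obtain y where "y \<in> set (filter P ys)" by (metis list.set_sel(1))
  then have "y \<in> set ys" "y mod int p = int k0" by (simp_all add: P_def)
  then show ?thesis using xk by (metis mod_eq_dvd_iff)
qed

end

context rootp begin

lemma E_mult: "E x * E y = E (x + y)" by (simp add: E_add)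

lemma pdvd_mult: "int p dvd a * b \<Longrightarrow> int p dvd a \<or> int p dvd b"
  using pr by (simp add: prime_dvd_mult_iff)

lemma key:
  fixes c d :: real and I J K L r s :: int
  assumes c: "c \<noteq> 0"
    and dIJ: "\<not> int p dvd (I - J)" and dKL: "\<not> int p dvd (K - L)"
    and dIK: "\<not> int p dvd (I - K)" and dJL: "\<not> int p dvd (J - L)" and dIL: "\<not> int p dvd (I - L)"
    and r: "\<not> int p dvd r" and s: "\<not> int p dvd s"
    and Fr: "of_real c * (E (r*I) - E (r*J)) + of_real d * (E (r*K) - E (r*L)) = 0"
    and Fs: "of_real c * (E (s*I) - E (s*J)) + of_real d * (E (s*K) - E (s*L)) = 0"
  shows "int p dvd (r - s) \<or> int p dvd (r + s)"
proof -
  define Ar where "Ar = E (r*I) - E (r*J)"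
  define As where "As = E (s*I) - E (s*J)"
  define Br where "Br = E (r*K) - E (r*L)"
  define Bs where "Bs = E (s*K) - E (s*L)"
  have "of_real c * (Ar*Bs - As*Br) = (of_real c*Ar + of_real d*Br)*Bs - (of_real c*As + of_real d*Bs)*Br"
    by (simp add: algebra_simps)
  also have "\<dots> = 0" using Fr Fs by (simp add: Ar_def As_def Br_def Bs_def)
  finally have "Ar*Bs = As*Br" using c by simp
  then have "E (r*I+s*K) - E (r*I+s*L) - E (r*J+s*K) + E (r*J+s*L) =
             E (s*I+r*K) - E (s*I+r*L) - E (s*J+r*K) + E (s*J+r*L)"
    by (simp add: Ar_def As_def Br_def Bs_def algebra_simps E_mult)
  then have eq: "(\<Sum>x\<leftarrow>[r*I+s*K, r*J+s*L, s*I+r*L, s*J+r*K]. E x) =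
                 (\<Sum>x\<leftarrow>[r*I+s*L, r*J+s*K, s*I+r*K, s*J+r*L]. E x)"
    by (simp add: algebra_simps)
  have "\<exists>y\<in>set [r*I+s*L, r*J+s*K, s*I+r*K, s*J+r*L]. int p dvd (r*I+s*K) - y"
    by (rule match[OF _ eq]) simp_all
  then obtain y1 where y1: "y1 \<in> set [r*I+s*L, r*J+s*K, s*I+r*K, s*J+r*L]" "int p dvd (r*I+s*K) - y1"
    by blast
  have "\<exists>y\<in>set [r*I+s*L, r*J+s*K, s*I+r*K, s*J+r*L]. int p dvd (r*J+s*L) - y"
    by (rule match[OF _ eq]) simp_all
  then obtain y2 where y2: "y2 \<in> set [r*I+s*L, r*J+s*K, s*I+r*K, s*J+r*L]" "int p dvd (r*J+s*L) - y2"
    by blast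
  show ?thesis
  proof (rule ccontr)
    assume nt: "\<not> ?thesis"
    have H1: "int p dvd (r*I+s*K) - (s*J+r*L)"
    proof -
      have "y1 = r*I+s*L \<or> y1 = r*J+s*K \<or> y1 = s*I+r*K \<or> y1 = s*J+r*L" using y1(1) by simp
      moreover have False if "y1 = r*I+s*L"
      proof -
        have "s*(K-L) = (r*I+s*K) - y1" using that by (simp add: algebra_simps)
        then have "int p dvd s*(K-L)" using y1(2) by simp
        then show False using s dKL pdvd_mult by blast
      qed
      moreover have False if "y1 = r*J+s*K"
      proof -
        have "r*(I-J) = (r*I+s*K) - y1" using that by (simp add: algebra_simps)
        then have "int p dvd r*(I-J)" using y1(2) by simp
        then show False using r dIJ pdvd_mult by blast
      qed
      moreover have False if "y1 = s*I+r*K"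
      proof -
        have "(r-s)*(I-K) = (r*I+s*K) - y1" using that by (simp add: algebra_simps)
        then have "int p dvd (r-s)*(I-K)" using y1(2) by simp
        then show False using nt dIK pdvd_mult by blast
      qed
      ultimately show ?thesis using y1(2) by blast
    qed
    have H2: "int p dvd (r*J+s*L) - (s*I+r*K)"
    proof -
      have "y2 = r*I+s*L \<or> y2 = r*J+s*K \<or> y2 = s*I+r*K \<or> y2 = s*J+r*L" using y2(1) by simp
      moreover have False if "y2 = r*I+s*L"
      proof -
        have "r*(J-I) = (r*J+s*L) - y2" using that by (simp add: algebra_simps)
        then have "int p dvd r*(J-I)" using y2(2) by simp
        moreover have "\<not> int p dvd (J-I)" using dIJ by (metis dvd_diff_commute)
        ultimately show False using r pdvd_mult by blast
      qed
      moreover have False if "y2 = r*J+s*K"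
      proof -
        have "s*(L-K) = (r*J+s*L) - y2" using that by (simp add: algebra_simps)
        then have "int p dvd s*(L-K)" using y2(2) by simp
        moreover have "\<not> int p dvd (L-K)" using dKL by (metis dvd_diff_commute)
        ultimately show False using s pdvd_mult by blast
      qed
      moreover have False if "y2 = s*J+r*L"
      proof -
        have "(r-s)*(J-L) = (r*J+s*L) - y2" using that by (simp add: algebra_simps)
        then have "int p dvd (r-s)*(J-L)" using y2(2) by simp
        then show False using nt dJL pdvd_mult by blast
      qed
      ultimately show ?thesis using y2(2) by blast
    qed
    define T where "T = I + J - K - L"
    have "(r-s)*T = ((r*I+s*K) - (s*J+r*L)) + ((r*J+s*L) - (s*I+r*K))"
      by (simp add: T_def algebra_simps)
    then have "int p dvd (r-s)*T" using H1 H2 by simp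
    then have "int p dvd T" using nt pdvd_mult by blast
    have "(r+s)*(I-L) = ((r*I+s*K) - (s*J+r*L)) + s*T"
      by (simp add: T_def algebra_simps)
    then have "int p dvd (r+s)*(I-L)" using H1 \<open>int p dvd T\<close> by simp
    moreover note dIL
    ultimately show False using nt pdvd_mult by blast
  qed
qed

end

lemma periodic_sum_shift:
  fixes \<phi> :: "nat \<Rightarrow> 'a::cancel_comm_monoid_add"
  assumes per: "\<And>t. \<phi> (t + p) = \<phi> t"
  shows "(\<Sum>t<p. \<phi> (t + I)) = (\<Sum>t<p. \<phi> t)"
proof (induct I)
  case 0 then show ?case by simp
next
  case (Suc I)
  define \<psi> where "\<psi> t = \<phi> (t + I)" for t
  have "(\<Sum>t<Suc p. \<psi> t) = \<psi> 0 + (\<Sum>t<p. \<psi> (Suc t))" by (rule sum.lessThan_Suc_shift)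
  moreover have "(\<Sum>t<Suc p. \<psi> t) = (\<Sum>t<p. \<psi> t) + \<psi> p" by simp
  moreover have "\<psi> p = \<psi> 0" using per[of I] by (simp add: \<psi>_def add.commute)
  ultimately have "\<psi> 0 + (\<Sum>t<p. \<psi> (Suc t)) = \<psi> 0 + (\<Sum>t<p. \<psi> t)" by (simp add: add.commute)
  then have "(\<Sum>t<p. \<psi> (Suc t)) = (\<Sum>t<p. \<psi> t)" by simp
  then show ?case using Suc by (simp add: \<psi>_def)
qed

context rootp begin

definition yhat :: "(nat \<Rightarrow> real) \<Rightarrow> nat \<Rightarrow> complex" where
  "yhat y r = (\<Sum>q<p. of_real (y q) * E (- (int r * int q)))"

lemma E_per: "E (x + int p * k) = E x"
  by (simp add: E_eq_iff)

lemma E_pow: "E (int r * m) = E m ^ r"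
proof (induct r)
  case 0 then show ?case by (simp add: E_def)
next
  case (Suc r)
  have "E (int (Suc r) * m) = E (int r * m + m)" by (simp add: algebra_simps)
  also have "\<dots> = E (int r * m) * E m" by (rule E_add)
  finally show ?case using Suc by (simp add: mult.commute)
qed

lemma sum_E: "(\<Sum>r<p. E (int r * m)) = (if int p dvd m then of_nat p else 0)"
proof (cases "int p dvd m")
  case True
  then have "E m = 1" by (simp add: E_1_iff)
  then show ?thesis using True by (simp add: E_pow)
next
  case False
  then have ne: "E m \<noteq> 1" by (simp add: E_1_iff)
  have "E m ^ p = E (int p * m)" by (simp add: E_pow)
  also have "\<dots> = 1" by (simp add: E_1_iff)
  finally have "(E m - 1) * (\<Sum>r<p. E m ^ r) = 0" by (simp add: power_diff_1_eq[symmetric])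
  then show ?thesis using False ne by (simp add: E_pow)
qed

lemma inversion:
  assumes q: "q < p"
  shows "of_real (y q) * of_nat p = (\<Sum>r<p. yhat y r * E (int r * int q))"
proof -
  have "(\<Sum>r<p. yhat y r * E (int r * int q)) =
        (\<Sum>r<p. \<Sum>q'<p. of_real (y q') * E (int r * (int q - int q')))"
  proof (rule sum.cong)
    fix r assume "r \<in> {..<p}"
    have th: "of_real (y q') * E (- (int r * int q')) * E (int r * int q) =
          of_real (y q') * E (int r * (int q - int q'))" for q'
    proof -
      have "E (- (int r * int q')) * E (int r * int q) = E (int r * (int q - int q'))"
        by (simp add: E_mult right_diff_distrib)
      then show ?thesis by (simp add: mult.assoc)
    qed
    show "yhat y r * E (int r * int q) = (\<Sum>q'<p. of_real (y q') * E (int r * (int q - int q')))"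
      unfolding yhat_def sum_distrib_right by (rule sum.cong) (simp_all only: th)
  qed simp
  also have "\<dots> = (\<Sum>q'<p. of_real (y q') * (\<Sum>r<p. E (int r * (int q - int q'))))"
    by (subst sum.swap) (simp add: sum_distrib_left)
  also have "\<dots> = (\<Sum>q'<p. if q' = q then of_real (y q') * of_nat p else 0)"
  proof (rule sum.cong)
    fix q' assume "q' \<in> {..<p}"
    then have "q' < p" by simp
    have "int p dvd (int q - int q') \<longleftrightarrow> q' = q"
    proof
      assume "int p dvd (int q - int q')"
      then have "int q mod int p = int q' mod int p" by (simp add: mod_eq_dvd_iff)
      then show "q' = q" using q \<open>q' < p\<close> by simp
    qed simp
    then show "of_real (y q') * (\<Sum>r<p. E (int r * (int q - int q'))) =
               (if q' = q then of_real (y q') * of_nat p else 0)" by (simp add: sum_E)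
  qed simp
  also have "\<dots> = of_real (y q) * of_nat p" using q by (simp add: sum.delta)
  finally show ?thesis by simp
qed

end

context rootp begin

lemma E_cnj: "cnj (E x) = E (- x)"
  by (simp add: E_def cis_cnj)

lemma shift_sum:
  assumes per: "\<And>q. y (q + p) = y q"
  shows "(\<Sum>t<p. of_real (y (t + I)) * E (- (int r * int t))) = E (int r * int I) * yhat y r"
proof -
  define \<phi> where "\<phi> t = of_real (y t) * E (- (int r * int t))" for t
  have per\<phi>: "\<phi> (t + p) = \<phi> t" for t
  proof -
    have "E (- (int r * int (t + p))) = E (- (int r * int t) + int p * (- int r))"
      by (simp add: algebra_simps)
    also have "\<dots> = E (- (int r * int t))" by (rule E_per)
    finally show ?thesis using per by (simp add: \<phi>_def)
  qed
  have "(\<Sum>t<p. of_real (y (t + I)) * E (- (int r * int t))) = (\<Sum>t<p. E (int r * int I) * \<phi> (t + I))"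
  proof (rule sum.cong)
    fix t
    have "E (- (int r * int t)) = E (int r * int I) * E (- (int r * int (t + I)))"
      by (simp add: E_mult algebra_simps)
    then show "of_real (y (t + I)) * E (- (int r * int t)) = E (int r * int I) * \<phi> (t + I)"
      by (simp add: \<phi>_def)
  qed simp
  also have "\<dots> = E (int r * int I) * (\<Sum>t<p. \<phi> (t + I))" by (simp add: sum_distrib_left)
  also have "(\<Sum>t<p. \<phi> (t + I)) = (\<Sum>t<p. \<phi> t)" by (rule periodic_sum_shift) (rule per\<phi>)
  also have "(\<Sum>t<p. \<phi> t) = yhat y r" by (simp add: yhat_def \<phi>_def)
  finally show ?thesis .
qed

lemma conv:
  fixes c d :: real
  assumes per: "\<And>q. y (q + p) = y q"
    and eqn: "\<And>t. c * (y (t + I) - y (t + J)) + d * (y (t + K) - y (t + L)) = 0"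
  shows "(of_real c * (E (int r * int I) - E (int r * int J)) +
          of_real d * (E (int r * int K) - E (int r * int L))) * yhat y r = 0"
proof -
  let ?S = "\<lambda>I. (\<Sum>t<p. of_real (y (t + I)) * E (- (int r * int t)))"
  have "0 = (\<Sum>t<p. of_real (c * (y (t + I) - y (t + J)) + d * (y (t + K) - y (t + L))) * E (- (int r * int t)))"
    using eqn by simp
  also have "\<dots> = of_real c * (?S I - ?S J) + of_real d * (?S K - ?S L)"
    by (simp add: algebra_simps sum.distrib sum_subtractf sum_distrib_left)
  also have "\<dots> = (of_real c * (E (int r * int I) - E (int r * int J)) +
          of_real d * (E (int r * int K) - E (int r * int L))) * yhat y r"
    unfolding shift_sum[of y, OF per] by (simp add: algebra_simps)
  finally show ?thesis by simp
qed

lemma represent: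
  assumes r0: "0 < r0" "r0 < p" "2 * r0 \<noteq> p"
    and van: "\<And>r. r < p \<Longrightarrow> r \<noteq> 0 \<Longrightarrow> r \<noteq> r0 \<Longrightarrow> r \<noteq> p - r0 \<Longrightarrow> yhat y r = 0"
    and q: "q < p"
  shows "y q * real p = Re (yhat y 0) + 2 * Re (yhat y r0) * cos (2 * pi * real (r0 * q) / real p)
                        - 2 * Im (yhat y r0) * sin (2 * pi * real (r0 * q) / real p)"
proof -
  have sub: "{0, r0, p - r0} \<subseteq> {..<p}" using r0 by auto
  have vz: "\<forall>r\<in>{..<p} - {0, r0, p - r0}. yhat y r * E (int r * int q) = 0"
  proof
    fix r assume "r \<in> {..<p} - {0, r0, p - r0}"
    then have "r < p" "r \<noteq> 0" "r \<noteq> r0" "r \<noteq> p - r0" by auto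
    then show "yhat y r * E (int r * int q) = 0" using van by simp
  qed
  have "of_real (y q) * of_nat p = (\<Sum>r<p. yhat y r * E (int r * int q))" by (rule inversion[OF q])
  also have "\<dots> = (\<Sum>r\<in>{0, r0, p - r0}. yhat y r * E (int r * int q))"
    using sum.mono_neutral_right[OF _ sub vz] by simp
  also have "\<dots> = yhat y 0 + yhat y r0 * E (int r0 * int q) + yhat y (p - r0) * E (int (p - r0) * int q)"
    using r0 by (simp add: E_def)
  also have "yhat y (p - r0) = cnj (yhat y r0)"
  proof -
    have "E (- (int (p - r0) * int q')) = cnj (E (- (int r0 * int q')))" for q'
    proof -
      have "E (- (int (p - r0) * int q')) = E (int r0 * int q' + int p * (- int q'))"
        using r0 by (simp add: of_nat_diff algebra_simps)
      also have "\<dots> = E (int r0 * int q')" by (rule E_per)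
      finally show ?thesis by (simp add: E_cnj)
    qed
    then show ?thesis by (simp add: yhat_def)
  qed
  also have "E (int (p - r0) * int q) = cnj (E (int r0 * int q))"
  proof -
    have "E (int (p - r0) * int q) = E (- (int r0 * int q) + int p * int q)"
      using r0 by (simp add: of_nat_diff algebra_simps)
    also have "\<dots> = E (- (int r0 * int q))" by (rule E_per)
    finally show ?thesis by (simp add: E_cnj)
  qed
  finally have eq: "of_real (y q) * of_nat p = yhat y 0 + (yhat y r0 * E (int r0 * int q) + cnj (yhat y r0 * E (int r0 * int q)))"
    by (simp add: add.assoc)
  have "y q * real p = Re (of_real (y q) * of_nat p)" by simp
  also have "\<dots> = Re (yhat y 0) + 2 * Re (yhat y r0 * E (int r0 * int q))"
    by (subst eq) simp
  also have "Re (yhat y r0 * E (int r0 * int q)) = Re (yhat y r0) * cos (2 * pi * real (r0 * q) / real p)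
              - Im (yhat y r0) * sin (2 * pi * real (r0 * q) / real p)"
    by (simp add: E_def)
  finally show ?thesis by (simp add: algebra_simps)
qed

end

lemma perm_act_nth: "perm_act g v $ m = v $ (inv g m)"
  by (simp add: perm_act_def)

lemma perm_act_comp:
  assumes "bij g" "bij h"
  shows "perm_act g (perm_act h v) = perm_act (g \<circ> h) v"
  using assms by (simp add: vec_eq_iff perm_act_nth o_inv_distrib)

lemma inner_perm_act:
  fixes a x :: "real^'n"
  assumes "g permutes UNIV"
  shows "a \<bullet> perm_act g x = (\<Sum>m\<in>UNIV. a $ (g m) * x $ m)"
proof -
  have "a \<bullet> perm_act g x = (\<Sum>m\<in>UNIV. a $ m * x $ (inv g m))"
    by (simp add: inner_vec_def perm_act_nth)
  also have "\<dots> = (\<Sum>m\<in>UNIV. a $ (g m) * x $ (inv g (g m)))"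
    using sum.permute[OF assms, of "\<lambda>m. a $ m * x $ (inv g m)"] by (simp add: o_def)
  also have "\<dots> = (\<Sum>m\<in>UNIV. a $ (g m) * x $ m)"
    using permutes_inverses(2)[OF assms] by simp
  finally show ?thesis .
qed

lemma aux_div:
  fixes P X A B Cc Cs Sn :: real
  assumes "P > 0" "X * P = A + 2*B*Cs - 2*Cc*Sn"
  shows "X = A/P + (2*B/P)*Cs + (-2*Cc/P)*Sn"
proof -
  have "X = (X * P) / P" using assms(1) by simp
  also have "\<dots> = A/P + (2*B/P)*Cs + (-2*Cc/P)*Sn" using assms(2) by (simp add: field_simps)
  finally show ?thesis .
qed

lemma funpow_in_G:
  assumes "perm_subgroup G" "\<pi> \<in> G"
  shows "\<pi> ^^ t \<in> G"
  using assms by (induct t) (auto simp: perm_subgroup_def)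

theorem lemma4p6:
  fixes v a :: "real^'n" and G :: "('n \<Rightarrow> 'n) set" and \<pi> :: "'n \<Rightarrow> 'n"
    and i j k l :: 'n
  assumes "prime CARD('n)" and "CARD('n) \<ge> 5"
    and "inj (\<lambda>m. v $ m)"
    and "a \<noteq> 0"
    and "distinct [i, j, k, l]"
    and "full_cycle \<pi>"
    and "perm_subgroup G" and "\<pi> \<in> G"
    and "dim (span ((\<lambda>g. perm_act g v) ` G)) > 3"
    and "(\<lambda>g. perm_act g v) ` G \<subseteq> {x. a \<bullet> x = 0}"
    and "(\<lambda>g. perm_act (Transposition.transpose i j \<circ> Transposition.transpose k l) (perm_act g v)) ` G \<subseteq> {x. a \<bullet> x = 0}"
  shows "a $ i = a $ j \<and> a $ k = a $ l"
proof -
  note hyps = assms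
  define p where "p = CARD('n)"
  have pr: "prime p" and p5: "p \<ge> 5" using assms(1,2) by (simp_all add: p_def)
  interpret rootp p by unfold_locales (rule pr)
  obtain cs where cs: "distinct cs" "length cs = p" "\<pi> = cycle_of_list cs"
    using assms(6) by (auto simp: full_cycle_def p_def)
  have setcs: "set cs = UNIV"
    by (rule card_subset_eq) (simp_all add: distinct_card[OF cs(1)] cs(2) p_def)
  define pos where "pos m = (SOME q. q < p \<and> cs ! q = m)" for m
  have pos: "pos m < p \<and> cs ! pos m = m" for m
  proof -
    have "\<exists>q. q < p \<and> cs ! q = m" using setcs cs(2) by (metis UNIV_I in_set_conv_nth)
    then show ?thesis unfolding pos_def by (rule someI_ex)
  qed
  have pos_nth: "pos (cs ! q) = q" if "q < p" for q
    using pos[of "cs ! q"] that cs by (metis nth_eq_iff_index_eq)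
  have powpi: "(\<pi> ^^ t) (cs ! q) = cs ! ((q + t) mod p)" if "q < p" for q t
  proof -
    have "map (\<pi> ^^ t) cs ! q = rotate t cs ! q" using cyclic_rotation[OF cs(1), of t] cs(3) by simp
    then show ?thesis using that cs(2) by (simp add: nth_rotate add.commute)
  qed
  have Gperm: "g permutes UNIV" if "g \<in> G" for g using assms(7) that by (auto simp: perm_subgroup_def)
  have Gbij: "bij g" if "g \<in> G" for g using Gperm[OF that] by (rule permutes_bij)
  have Gcomp: "g \<circ> h \<in> G" if "g \<in> G" "h \<in> G" for g h using assms(7) that by (auto simp: perm_subgroup_def)
  have Ginv: "inv g \<in> G" if "g \<in> G" for g using assms(7) that by (auto simp: perm_subgroup_def)
  have Gid: "id \<in> G" using assms(7) by (auto simp: perm_subgroup_def)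
  define c where "c = a $ i - a $ j"
  define d where "d = a $ k - a $ l"
  define \<sigma> where "\<sigma> = Transposition.transpose i j \<circ> Transposition.transpose k l"
  define orb where "orb = (\<lambda>g. perm_act g v) ` G"
  have dist: "i \<noteq> j" "i \<noteq> k" "i \<noteq> l" "j \<noteq> k" "j \<noteq> l" "k \<noteq> l" using assms(5) by auto
  have \<sigma>perm: "\<sigma> permutes UNIV" unfolding \<sigma>_def
    by (intro permutes_compose permutes_swap_id) simp_all
  have eqx: "c * (x $ i - x $ j) + d * (x $ k - x $ l) = 0" if xo: "x \<in> orb" for x
  proof -
    obtain g where g: "g \<in> G" "x = perm_act g v" using xo by (auto simp: orb_def)
    have h1: "a \<bullet> x = 0" using assms(10) g by auto
    have h2: "a \<bullet> perm_act \<sigma> x = 0" using assms(11) g by (auto simp: \<sigma>_def)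
    have "(\<Sum>m\<in>UNIV. (a $ m - a $ (\<sigma> m)) * x $ m) = a \<bullet> x - a \<bullet> perm_act \<sigma> x"
      unfolding inner_perm_act[OF \<sigma>perm] by (simp add: inner_vec_def left_diff_distrib sum_subtractf)
    also have "\<dots> = 0" using h1 h2 by simp
    finally have s0: "(\<Sum>m\<in>UNIV. (a $ m - a $ (\<sigma> m)) * x $ m) = 0" .
    have fix\<sigma>: "\<sigma> m = m" if mn: "m \<notin> {i, j, k, l}" for m
      using mn by (auto simp: \<sigma>_def transpose_def)
    have "(\<Sum>m\<in>UNIV. (a $ m - a $ (\<sigma> m)) * x $ m) = (\<Sum>m\<in>{i,j,k,l}. (a $ m - a $ (\<sigma> m)) * x $ m)"
      by (rule sum.mono_neutral_right) (auto simp: fix\<sigma>)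
    also have "\<dots> = c * (x $ i - x $ j) + d * (x $ k - x $ l)"
      using dist by (simp add: \<sigma>_def transpose_def c_def d_def algebra_simps)
    finally show ?thesis using s0 by simp
  qed
  have "perm_act id v = v" by (simp add: perm_act_def vec_eq_iff inv_id)
  then have vorb: "v \<in> orb" using Gid unfolding orb_def by (metis image_eqI)
  show ?thesis
  proof (cases "c = 0")
    case True
    have "d * (v $ k - v $ l) = 0" using eqx[OF vorb] True by simp
    moreover have "v $ k \<noteq> v $ l" using assms(3) dist by (meson injD)
    ultimately have "d = 0" by simp
    then show ?thesis using True by (simp add: c_def d_def)
  next
    case False
    have c0: "c \<noteq> 0" by fact
    define I where "I = pos i"
    define J where "J = pos j"
    define K where "K = pos k"
    define L where "L = pos l"
    have IJKL: "I < p" "J < p" "K < p" "L < p" "cs ! I = i" "cs ! J = j" "cs ! K = k" "cs ! L = l"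
      using pos by (simp_all add: I_def J_def K_def L_def)
    have ndvd: "\<not> int p dvd (int A - int B)" if "A < p" "B < p" "A \<noteq> B" for A B
    proof
      assume "int p dvd (int A - int B)"
      then have "int A mod int p = int B mod int p" by (simp add: mod_eq_dvd_iff)
      then show False using that by simp
    qed
    have dIJ: "\<not> int p dvd (int I - int J)" using ndvd IJKL dist by metis
    have dKL: "\<not> int p dvd (int K - int L)" using ndvd IJKL dist by metis
    have dIK: "\<not> int p dvd (int I - int K)" using ndvd IJKL dist by metis
    have dJL: "\<not> int p dvd (int J - int L)" using ndvd IJKL dist by metis
    have dIL: "\<not> int p dvd (int I - int L)" using ndvd IJKL dist by metis
    define Fz where "Fz r = of_real c * (E (int r * int I) - E (int r * int J)) +
                            of_real d * (E (int r * int K) - E (int r * int L))" for r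
    define r0 where "r0 = (if \<exists>r. 0 < r \<and> r < p \<and> Fz r = 0 then SOME r. 0 < r \<and> r < p \<and> Fz r = 0 else 1)"
    have r0: "0 < r0" "r0 < p"
    proof -
      have "0 < r0 \<and> r0 < p"
      proof (cases "\<exists>r. 0 < r \<and> r < p \<and> Fz r = 0")
        case True
        then show ?thesis unfolding r0_def using someI_ex[OF True] by simp
      next
        case False
        have "r0 = 1" unfolding r0_def by (rule if_not_P[OF False])
        then show ?thesis using p5 by simp
      qed
      then show "0 < r0" "r0 < p" by auto
    qed
    have r0odd: "2 * r0 \<noteq> p"
    proof
      assume "2 * r0 = p"
      then have "even p" by auto
      moreover have "odd p" using prime_odd_nat[OF pr] p5 by simp
      ultimately show False by simp
    qed
    have Fnz: "Fz r \<noteq> 0" if "0 < r" "r < p" "r \<noteq> r0" "r \<noteq> p - r0" for r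
    proof
      assume Fr: "Fz r = 0"
      then have ex: "\<exists>r. 0 < r \<and> r < p \<and> Fz r = 0" using that by blast
      then have "0 < r0 \<and> r0 < p \<and> Fz r0 = 0" unfolding r0_def using someI_ex[OF ex] by simp
      then have Fr0: "Fz r0 = 0" by simp
      have nr: "\<not> int p dvd int r" using that by (simp add: nat_dvd_not_less)
      have nr0: "\<not> int p dvd int r0" using r0 by (simp add: nat_dvd_not_less)
      have "int p dvd (int r - int r0) \<or> int p dvd (int r + int r0)"
        by (rule key[OF c0 dIJ dKL dIK dJL dIL nr nr0]) (use Fr Fr0 in \<open>simp_all add: Fz_def\<close>)
      then show False
      proof
        assume "int p dvd (int r - int r0)"
        then show False using ndvd[of r r0] that r0 by simp
      next
        assume h: "int p dvd (int r + int r0)"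
        have "0 < int r + int r0" "int r + int r0 < 2 * int p" using that r0 by auto
        from h obtain k where k: "int r + int r0 = int p * k" by (elim dvdE)
        have "0 < int p * k" using k \<open>0 < int r + int r0\<close> by simp
        then have "0 < k" using p_pos by (simp add: zero_less_mult_iff)
        have "int p * k < int p * 2" using k \<open>int r + int r0 < 2 * int p\<close> by (simp add: mult.commute)
        then have "k < 2" using p_pos by simp
        then have "k = 1" using \<open>0 < k\<close> by simp
        then have "int r + int r0 = int p" using k by simp
        then show False using that by simp
      qed
    qed
    define b1 :: "real^'n" where "b1 = (\<chi> m. 1)"
    define b2 :: "real^'n" where "b2 = (\<chi> m. cos (2 * pi * real (r0 * pos m) / real p))"
    define b3 :: "real^'n" where "b3 = (\<chi> m. sin (2 * pi * real (r0 * pos m) / real p))"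
    have inspan: "x \<in> span {b1, b2, b3}" if xo: "x \<in> orb" for x
    proof -
      define y where "y q = x $ (cs ! (q mod p))" for q
      have per: "y (q + p) = y q" for q by (simp add: y_def)
      have eqn: "c * (y (t + I) - y (t + J)) + d * (y (t + K) - y (t + L)) = 0" for t
      proof -
        obtain g where g: "g \<in> G" "x = perm_act g v" using xo by (auto simp: orb_def)
        have pt: "\<pi> ^^ t \<in> G" by (rule funpow_in_G[OF assms(7,8)])
        define x' where "x' = perm_act (inv (\<pi> ^^ t)) x"
        have "x' = perm_act (inv (\<pi> ^^ t) \<circ> g) v"
          unfolding x'_def g(2) by (rule perm_act_comp) (simp_all add: Gbij Ginv pt g bij_imp_bij_inv)
        then have "x' \<in> orb" unfolding orb_def using Gcomp[OF Ginv[OF pt] g(1)] by blast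
        then have e: "c * (x' $ i - x' $ j) + d * (x' $ k - x' $ l) = 0" by (rule eqx)
        have x'nth: "x' $ (cs ! Q) = y (t + Q)" if "Q < p" for Q
        proof -
          have "x' $ (cs ! Q) = x $ ((\<pi> ^^ t) (cs ! Q))"
            by (simp add: x'_def perm_act_nth inv_inv_eq Gbij[OF pt])
          also have "\<dots> = y (t + Q)" using powpi[OF that] by (simp add: y_def add.commute)
          finally show ?thesis .
        qed
        show ?thesis using e x'nth[of I] x'nth[of J] x'nth[of K] x'nth[of L] IJKL by simp
      qed
      have van: "yhat y r = 0" if "r < p" "r \<noteq> 0" "r \<noteq> r0" "r \<noteq> p - r0" for r
      proof -
        have "Fz r * yhat y r = 0" unfolding Fz_def by (rule conv[of y, OF per eqn])
        then show ?thesis using Fnz[of r] that by simp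
      qed
      have rep: "y q * real p = Re (yhat y 0) + 2 * Re (yhat y r0) * cos (2 * pi * real (r0 * q) / real p)
                        - 2 * Im (yhat y r0) * sin (2 * pi * real (r0 * q) / real p)" if "q < p" for q
        by (rule represent[OF r0 r0odd van that])
      have "x = (Re (yhat y 0) / real p) *\<^sub>R b1 + (2 * Re (yhat y r0) / real p) *\<^sub>R b2
                 + (- 2 * Im (yhat y r0) / real p) *\<^sub>R b3"
      proof (rule vec_eq_iff[THEN iffD2], rule allI)
        fix m
        have "x $ m = y (pos m)" using pos[of m] by (simp add: y_def)
        then have "x $ m * real p = Re (yhat y 0) + 2 * Re (yhat y r0) * cos (2 * pi * real (r0 * pos m) / real p)
                        - 2 * Im (yhat y r0) * sin (2 * pi * real (r0 * pos m) / real p)"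
          using rep[of "pos m"] pos[of m] by simp
        then show "x $ m = ((Re (yhat y 0) / real p) *\<^sub>R b1 + (2 * Re (yhat y r0) / real p) *\<^sub>R b2
                 + (- 2 * Im (yhat y r0) / real p) *\<^sub>R b3) $ m"
          using aux_div[OF _ \<open>x $ m * real p = _\<close>] p_pos by (simp add: b1_def b2_def b3_def)
      qed
      also have "\<dots> \<in> span {b1, b2, b3}"
        by (intro span_add span_scale span_base) auto
      finally show ?thesis .
    qed
    have "dim (span orb) = dim orb" by (rule dim_span)
    also have "\<dots> \<le> card {b1, b2, b3}" by (rule dim_le_card) (use inspan in auto)
    also have "\<dots> \<le> 3" by (simp add: card_insert_le_m1)
    finally have "dim (span orb) \<le> 3" .
    then show ?thesis using assms(9) by (simp add: orb_def)
  qed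
qed

end
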